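(* Let $n,m\in\mathbb N$, $d:=\min\{n,m\}$, fix $\alpha\in[1,d]$ and let $\Phi:\mathbb M_n\to\mathbb M_m$ be Hermitian-preserving. (a) For all unitaries $U\in\mathbb M_m$, $V\in\mathbb M_n$: $\Phi\in\mathsf P_\alpha\iff\mathrm{Ad}_U\circ\Phi\circ\mathrm{Ad}_V\in\mathsf P_\alpha$, and $\Phi\in\mathsf{SP}_\alpha\iff\mathrm{Ad}_U\circ\Phi\circ\mathrm{Ad}_V\in\mathsf{SP}_\alpha$, where $\mathrm{Ad}_U(Y)=UYU^\ast$. (b) Membership of $\Phi$ in $\mathsf P_\alpha$ (and in $\mathsf{SP}_\alpha$) does not depend on the choice of matrix units used to define the Choi matrix: for any orthonormal basis $\{v_i\}$ of $\mathbb C^n$, with $E'_{ij}:=v_iv_j^\ast$ and $C'_\Phi:=\sum_{i,j}E'_{ij}\otimes\Phi(E'_{ij})$, one has $C'_\Phi\in\mathsf{BP}_\alpha\iff C_\Phi\in\mathsf{BP}_\alpha$ and $C'_\Phi\in\mathsf K_\alpha\iff C_\Phi\in\mathsf K_\alpha$.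
   Context: $C_\Phi:=\sum_{i,j=1}^nE_{ij}\otimes\Phi(E_{ij})$ with $E_{ij}$ the standard matrix units of $\mathbb M_n$. For $\psi=\sum_{i,j}a_{ij}e_i\otimes f_j\in\mathbb C^n\otimes\mathbb C^m$, its Schmidt coefficients $s_1(\psi)\ge\dots\ge s_d(\psi)\ge0$ are the singular values of $[a_{ij}]$. For $\alpha\in[1,d]$ with $k=\lfloor\alpha\rfloor$, $\theta=\alpha-k$, $r=\lceil\alpha\rceil$, a unit vector $\psi$ is $\alpha$-admissible if $s_j(\psi)=0$ for $j\ge r+1$ and, when $\theta>0$, $s_{k+1}(\psi)\le\frac\theta k\sum_{j=1}^ks_j(\psi)$; $\mathcal V_\alpha$ is the set of these. $\mathsf K_\alpha$ is the closure of the convex cone generated by $\{\psi\psi^\ast:\psi\in\mathcal V_\alpha\}$; $\mathsf{BP}_\alpha:=\{W \text{ Hermitian}:\langle\psi,W\psi\rangle\ge0\ \forall\psi\in\mathcal V_\alpha\}$. A Hermitian-preserving $\Phi$ is in $\mathsf P_\alpha$ if $C_\Phi\in\mathsf{BP}_\alpha$ and in $\mathsf{SP}_\alpha$ if $C_\Phi\in\mathsf K_\alpha$. *)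

theory Defs
  imports "Jordan_Normal_Form.Char_Poly" "HOL-Computational_Algebra.Polynomial"
begin

definition cadj :: "complex mat \<Rightarrow> complex mat" where
  "cadj A = mat (dim_col A) (dim_row A) (\<lambda>(i,j). cnj (A $$ (j,i)))"

definition hermitian_mat :: "nat \<Rightarrow> complex mat \<Rightarrow> bool" where
  "hermitian_mat N A \<longleftrightarrow> A \<in> carrier_mat N N \<and> cadj A = A"

definition unitary_mat :: "nat \<Rightarrow> complex mat \<Rightarrow> bool" where
  "unitary_mat N U \<longleftrightarrow> U \<in> carrier_mat N N \<and> U * cadj U = 1\<^sub>m N \<and> cadj U * U = 1\<^sub>m N"

definition Ad :: "complex mat \<Rightarrow> complex mat \<Rightarrow> complex mat" where
  "Ad U Y = U * Y * cadj U"

(* Kronecker product, with e_i \<otimes> f_j at index i * m + j *)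
definition kron :: "complex mat \<Rightarrow> complex mat \<Rightarrow> complex mat" where
  "kron A B = mat (dim_row A * dim_row B) (dim_col A * dim_col B)
     (\<lambda>(i,j). A $$ (i div dim_row B, j div dim_col B) * B $$ (i mod dim_row B, j mod dim_col B))"

definition outer :: "complex vec \<Rightarrow> complex vec \<Rightarrow> complex mat" where
  "outer v w = mat (dim_vec v) (dim_vec w) (\<lambda>(i,j). v $ i * cnj (w $ j))"

definition cinner :: "complex vec \<Rightarrow> complex vec \<Rightarrow> complex" where
  "cinner v w = (\<Sum>i<dim_vec w. cnj (v $ i) * w $ i)"

definition matunit :: "nat \<Rightarrow> nat \<Rightarrow> nat \<Rightarrow> complex mat" where
  "matunit n i j = mat n n (\<lambda>(a,b). if a = i \<and> b = j then 1 else 0)"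

definition linear_map :: "nat \<Rightarrow> nat \<Rightarrow> (complex mat \<Rightarrow> complex mat) \<Rightarrow> bool" where
  "linear_map n m \<Phi> \<longleftrightarrow>
     (\<forall>A \<in> carrier_mat n n. \<Phi> A \<in> carrier_mat m m) \<and>
     (\<forall>A \<in> carrier_mat n n. \<forall>B \<in> carrier_mat n n. \<Phi> (A + B) = \<Phi> A + \<Phi> B) \<and>
     (\<forall>A \<in> carrier_mat n n. \<forall>c. \<Phi> (c \<cdot>\<^sub>m A) = c \<cdot>\<^sub>m \<Phi> A)"

definition hermitian_preserving :: "nat \<Rightarrow> nat \<Rightarrow> (complex mat \<Rightarrow> complex mat) \<Rightarrow> bool" where
  "hermitian_preserving n m \<Phi> \<longleftrightarrow> (\<forall>A. hermitian_mat n A \<longrightarrow> hermitian_mat m (\<Phi> A))"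

definition gen_choi :: "nat \<Rightarrow> nat \<Rightarrow> (nat \<Rightarrow> nat \<Rightarrow> complex mat) \<Rightarrow> (complex mat \<Rightarrow> complex mat) \<Rightarrow> complex mat" where
  "gen_choi n m E \<Phi> = mat (n * m) (n * m)
     (\<lambda>(a,b). \<Sum>i<n. \<Sum>j<n. kron (E i j) (\<Phi> (E i j)) $$ (a,b))"

definition choi :: "nat \<Rightarrow> nat \<Rightarrow> (complex mat \<Rightarrow> complex mat) \<Rightarrow> complex mat" where
  "choi n m \<Phi> = gen_choi n m (matunit n) \<Phi>"

(* coefficient matrix [a_ij] of psi = sum a_ij e_i \<otimes> f_j *)
definition coeff_mat :: "nat \<Rightarrow> nat \<Rightarrow> complex vec \<Rightarrow> complex mat" where
  "coeff_mat n m \<psi> = mat n m (\<lambda>(i,j). \<psi> $ (i * m + j))"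

(* Singular values of [a_ij] in decreasing order: square roots of the eigenvalues
   (with multiplicity) of A A^*; the j-th Schmidt coefficient s_j is entry (j-1). *)
definition schmidt :: "nat \<Rightarrow> nat \<Rightarrow> complex vec \<Rightarrow> real list" where
  "schmidt n m \<psi> = (let A = coeff_mat n m \<psi> in
     rev (map sqrt (sorted_list_of_multiset (image_mset Re (proots (char_poly (A * cadj A)))))))"

definition schmidt_coeff :: "nat \<Rightarrow> nat \<Rightarrow> complex vec \<Rightarrow> nat \<Rightarrow> real" where
  "schmidt_coeff n m \<psi> j = schmidt n m \<psi> ! (j - 1)"

definition unit_vec :: "nat \<Rightarrow> complex vec \<Rightarrow> bool" where
  "unit_vec N \<psi> \<longleftrightarrow> \<psi> \<in> carrier_vec N \<and> (\<Sum>i<N. (cmod (\<psi> $ i))\<^sup>2) = 1"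

definition admissible :: "nat \<Rightarrow> nat \<Rightarrow> real \<Rightarrow> complex vec \<Rightarrow> bool" where
  "admissible n m \<alpha> \<psi> \<longleftrightarrow>
     (let k = nat \<lfloor>\<alpha>\<rfloor>; \<theta> = \<alpha> - real k; r = nat \<lceil>\<alpha>\<rceil>; d = min n m;
          s = schmidt_coeff n m \<psi> in
      unit_vec (n * m) \<psi> \<and>
      (\<forall>j. r + 1 \<le> j \<and> j \<le> d \<longrightarrow> s j = 0) \<and>
      (\<theta> > 0 \<longrightarrow> s (k + 1) \<le> \<theta> / real k * (\<Sum>j=1..k. s j)))"

definition V_adm :: "nat \<Rightarrow> nat \<Rightarrow> real \<Rightarrow> complex vec set" where
  "V_adm n m \<alpha> = {\<psi>. admissible n m \<alpha> \<psi>}"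

definition cone_gen :: "nat \<Rightarrow> nat \<Rightarrow> real \<Rightarrow> complex mat set" where
  "cone_gen n m \<alpha> = {X. \<exists>K (c :: nat \<Rightarrow> real) \<psi>s.
      (\<forall>l<K. c l \<ge> 0 \<and> \<psi>s l \<in> V_adm n m \<alpha>) \<and>
      X = mat (n * m) (n * m) (\<lambda>(a,b). \<Sum>l<K. complex_of_real (c l) * outer (\<psi>s l) (\<psi>s l) $$ (a,b))}"

(* K_alpha: topological closure (entrywise, in M_{nm}) of the generated cone *)
definition K_cone :: "nat \<Rightarrow> nat \<Rightarrow> real \<Rightarrow> complex mat set" where
  "K_cone n m \<alpha> = {W. W \<in> carrier_mat (n * m) (n * m) \<and>
     (\<forall>\<epsilon>>0. \<exists>X \<in> cone_gen n m \<alpha>. \<forall>a < n * m. \<forall>b < n * m. cmod (X $$ (a,b) - W $$ (a,b)) < \<epsilon>)}"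

definition BP :: "nat \<Rightarrow> nat \<Rightarrow> real \<Rightarrow> complex mat set" where
  "BP n m \<alpha> = {W. hermitian_mat (n * m) W \<and>
     (\<forall>\<psi> \<in> V_adm n m \<alpha>. Re (cinner \<psi> (W *\<^sub>v \<psi>)) \<ge> 0)}"

definition in_P :: "nat \<Rightarrow> nat \<Rightarrow> real \<Rightarrow> (complex mat \<Rightarrow> complex mat) \<Rightarrow> bool" where
  "in_P n m \<alpha> \<Phi> \<longleftrightarrow> hermitian_preserving n m \<Phi> \<and> choi n m \<Phi> \<in> BP n m \<alpha>"

definition in_SP :: "nat \<Rightarrow> nat \<Rightarrow> real \<Rightarrow> (complex mat \<Rightarrow> complex mat) \<Rightarrow> bool" where
  "in_SP n m \<alpha> \<Phi> \<longleftrightarrow> hermitian_preserving n m \<Phi> \<and> choi n m \<Phi> \<in> K_cone n m \<alpha>"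

end

theory Submission
  imports Defs
begin


lemma sum_split_nat:
  fixes f :: "nat \<Rightarrow> 'a::comm_monoid_add"
  shows "(\<Sum>x<n*m. f x) = (\<Sum>k<n. \<Sum>l<m. f (k*m+l))"
proof (induction n)
  case 0 then show ?case by simp
next
  case (Suc n)
  have "{..<Suc n * m} = {..<n*m} \<union> {n*m..<n*m+m}" by auto
  hence "(\<Sum>x<Suc n*m. f x) = (\<Sum>x<n*m. f x) + (\<Sum>x\<in>{n*m..<n*m+m}. f x)"
    by (simp add: sum.union_disjoint ivl_disj_int)
  also have "(\<Sum>x\<in>{n*m..<n*m+m}. f x) = (\<Sum>l<m. f (n*m+l))"
    by (simp add: sum.atLeastLessThan_shift_0[of f "n*m"] atLeast0LessThan comp_def)
  finally show ?case using Suc by simp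
qed

lemma cadj_carrier[simp]: "cadj A \<in> carrier_mat (dim_col A) (dim_row A)"
  by (simp add: cadj_def)
lemma cadj_dims[simp]: "dim_row (cadj A) = dim_col A" "dim_col (cadj A) = dim_row A"
  by (simp_all add: cadj_def)
lemma cadj_index[simp]: "i < dim_col A \<Longrightarrow> j < dim_row A \<Longrightarrow> cadj A $$ (i,j) = cnj (A $$ (j,i))"
  by (simp add: cadj_def)
lemma cadj_cadj[simp]: "cadj (cadj A) = A"
  by (rule eq_matI) auto
lemma cadj_mult: "A \<in> carrier_mat a b \<Longrightarrow> B \<in> carrier_mat b c \<Longrightarrow> cadj (A * B) = cadj B * cadj A"
  by (rule eq_matI) (auto simp: scalar_prod_def mult.commute)

lemma kron_dims[simp]: "dim_row (kron A B) = dim_row A * dim_row B" "dim_col (kron A B) = dim_col A * dim_col B"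
  by (simp_all add: kron_def)
lemma kron_carrier: "A \<in> carrier_mat a b \<Longrightarrow> B \<in> carrier_mat p q \<Longrightarrow> kron A B \<in> carrier_mat (a*p) (b*q)"
  unfolding carrier_mat_def by auto
lemma kron_index: "i < dim_row A * dim_row B \<Longrightarrow> j < dim_col A * dim_col B \<Longrightarrow>
  kron A B $$ (i,j) = A $$ (i div dim_row B, j div dim_col B) * B $$ (i mod dim_row B, j mod dim_col B)"
  by (simp add: kron_def)

lemma div_lt: "i < a * (p::nat) \<Longrightarrow> i div p < a"
  by (metis less_mult_imp_div_less)
lemma mod_lt: "i < a * (p::nat) \<Longrightarrow> i mod p < p"
  by (metis mod_less_divisor mult_0_right not_less_zero zero_less_iff_neq_zero)

lemma pair_lt: "i < (a::nat) \<Longrightarrow> k < p \<Longrightarrow> i*p+k < a*p"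
proof -
  assume "i < a" "k < p"
  hence "i*p+k < i*p+p" by simp
  also have "\<dots> = Suc i * p" by simp
  also have "\<dots> \<le> a*p" using \<open>i<a\<close> by (intro mult_right_mono) auto
  finally show ?thesis .
qed

lemma kron_index_pair: "A \<in> carrier_mat a b \<Longrightarrow> B \<in> carrier_mat p q \<Longrightarrow> i < a \<Longrightarrow> j < b \<Longrightarrow> k < p \<Longrightarrow> l < q \<Longrightarrow>
  kron A B $$ (i*p+k, j*q+l) = A $$ (i,j) * B $$ (k,l)"
proof -
  assume A: "A \<in> carrier_mat a b" and B: "B \<in> carrier_mat p q" and "i < a" "j < b" "k < p" "l < q"
  have "i*p+k < a*p" using \<open>i < a\<close> \<open>k < p\<close> by (rule pair_lt)
  moreover have "j*q+l < b*q" using \<open>j < b\<close> \<open>l < q\<close> by (rule pair_lt)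
  ultimately show ?thesis using A B \<open>k<p\<close> \<open>l<q\<close> by (simp add: kron_index)
qed

lemma kron_mult:
  assumes A: "A \<in> carrier_mat a b" and C: "C \<in> carrier_mat b c" and B: "B \<in> carrier_mat p q" and D: "D \<in> carrier_mat q r"
  shows "kron A B * kron C D = kron (A * C) (B * D)"
proof (rule eq_matI)
  fix i j assume i: "i < dim_row (kron (A * C) (B * D))" and j: "j < dim_col (kron (A * C) (B * D))"
  have i': "i < a * p" and j': "j < c * r" using i j A B C D by auto
  have "(kron A B * kron C D) $$ (i,j) = (\<Sum>x<b*q. kron A B $$ (i,x) * kron C D $$ (x,j))"
    using i' j' A B C D by (simp add: scalar_prod_def atLeast0LessThan)
  also have "\<dots> = (\<Sum>k<b. \<Sum>l<q. kron A B $$ (i,k*q+l) * kron C D $$ (k*q+l,j))"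
    by (rule sum_split_nat)
  also have "\<dots> = (\<Sum>k<b. \<Sum>l<q. (A $$ (i div p, k) * C $$ (k, j div r)) * (B $$ (i mod p, l) * D $$ (l, j mod r)))"
  proof (intro sum.cong refl)
    fix k l assume k: "k \<in> {..<b}" and l: "l \<in> {..<q}"
    have "k*q+l < b*q" using k l by (simp add: pair_lt)
    then show "kron A B $$ (i,k*q+l) * kron C D $$ (k*q+l,j) = (A $$ (i div p, k) * C $$ (k, j div r)) * (B $$ (i mod p, l) * D $$ (l, j mod r))"
      using i' j' k l A B C D by (simp add: kron_index)
  qed
  also have "\<dots> = (\<Sum>k<b. A $$ (i div p, k) * C $$ (k, j div r)) * (\<Sum>l<q. B $$ (i mod p, l) * D $$ (l, j mod r))"
    by (simp add: sum_product)
  also have "\<dots> = kron (A * C) (B * D) $$ (i,j)"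
    using i' j' A B C D div_lt[OF i'] div_lt[OF j'] mod_lt[OF i'] mod_lt[OF j']
    by (simp add: kron_index scalar_prod_def atLeast0LessThan)
  finally show "(kron A B * kron C D) $$ (i,j) = kron (A * C) (B * D) $$ (i,j)" .
qed (use A B C D in auto)

lemma cadj_kron: "cadj (kron A B) = kron (cadj A) (cadj B)"
proof (rule eq_matI)
  fix i j assume i: "i < dim_row (kron (cadj A) (cadj B))" and j: "j < dim_col (kron (cadj A) (cadj B))"
  have i': "i < dim_col A * dim_col B" and j': "j < dim_row A * dim_row B" using i j by auto
  have "cadj (kron A B) $$ (i,j) = cnj (kron A B $$ (j,i))" using i' j' by simp
  also have "\<dots> = cnj (A $$ (j div dim_row B, i div dim_col B) * B $$ (j mod dim_row B, i mod dim_col B))"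
    using i' j' by (simp add: kron_index)
  also have "\<dots> = kron (cadj A) (cadj B) $$ (i,j)"
    using i' j' div_lt[OF i'] div_lt[OF j'] mod_lt[OF i'] mod_lt[OF j'] by (simp add: kron_index)
  finally show "cadj (kron A B) $$ (i,j) = kron (cadj A) (cadj B) $$ (i,j)" .
qed auto

lemma kron_one: "kron (1\<^sub>m a) (1\<^sub>m p) = 1\<^sub>m (a*p)"
proof (rule eq_matI)
  fix i j assume "i < dim_row (1\<^sub>m (a*p))" "j < dim_col (1\<^sub>m (a*p))"
  hence i: "i < a*p" and j: "j < a*p" by auto
  have "(i = j) = (i div p = j div p \<and> i mod p = j mod p)"
    by (metis div_mult_mod_eq)
  then show "kron (1\<^sub>m a) (1\<^sub>m p) $$ (i,j) = 1\<^sub>m (a*p) $$ (i,j)"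
    using i j div_lt[OF i] div_lt[OF j] mod_lt[OF i] mod_lt[OF j] by (simp add: kron_index)
qed auto

lemma unitary_kron: "unitary_mat a A \<Longrightarrow> unitary_mat p B \<Longrightarrow> unitary_mat (a*p) (kron A B)"
  unfolding unitary_mat_def
proof (elim conjE, intro conjI)
  assume A: "A \<in> carrier_mat a a" and B: "B \<in> carrier_mat p p" and 1: "A * cadj A = 1\<^sub>m a" "cadj A * A = 1\<^sub>m a"
    "B * cadj B = 1\<^sub>m p" "cadj B * B = 1\<^sub>m p"
  have cA: "cadj A \<in> carrier_mat a a" and cB: "cadj B \<in> carrier_mat p p" using A B cadj_carrier by auto
  show "kron A B \<in> carrier_mat (a*p) (a*p)" using A B by (rule kron_carrier)
  show "kron A B * cadj (kron A B) = 1\<^sub>m (a*p)"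
    unfolding cadj_kron kron_mult[OF A cA B cB] 1 kron_one ..
  show "cadj (kron A B) * kron A B = 1\<^sub>m (a*p)"
    unfolding cadj_kron kron_mult[OF cA A cB B] 1 kron_one ..
qed

lemma unitary_cadj: "unitary_mat a A \<Longrightarrow> unitary_mat a (cadj A)"
  unfolding unitary_mat_def by auto



lemma cadj_transpose: "cadj (transpose_mat A) = transpose_mat (cadj A)"
  by (rule eq_matI) auto

lemma unitary_transpose: assumes "unitary_mat N V" shows "unitary_mat N (transpose_mat V)"
proof -
  have V: "V \<in> carrier_mat N N" and 1: "V * cadj V = 1\<^sub>m N" "cadj V * V = 1\<^sub>m N"
    using assms unfolding unitary_mat_def by auto
  have cV: "cadj V \<in> carrier_mat N N" using V cadj_carrier by auto
  have "transpose_mat V * cadj (transpose_mat V) = transpose_mat (cadj V * V)"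
    unfolding cadj_transpose using transpose_mult[OF cV V] by simp
  moreover have "cadj (transpose_mat V) * transpose_mat V = transpose_mat (V * cadj V)"
    unfolding cadj_transpose using transpose_mult[OF V cV] by simp
  ultimately show ?thesis using V 1 unfolding unitary_mat_def by auto
qed

lemma cinner_mult:
  assumes A: "A \<in> carrier_mat r c" and x: "x \<in> carrier_vec r" and y: "y \<in> carrier_vec c"
  shows "cinner x (A *\<^sub>v y) = cinner (cadj A *\<^sub>v x) y"
proof -
  have "cinner x (A *\<^sub>v y) = (\<Sum>i<r. cnj (x $ i) * (\<Sum>j<c. A $$ (i,j) * y $ j))"
    using A x y by (simp add: cinner_def scalar_prod_def atLeast0LessThan)
  also have "\<dots> = (\<Sum>i<r. \<Sum>j<c. cnj (x $ i) * A $$ (i,j) * y $ j)"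
    by (simp add: sum_distrib_left mult.assoc)
  also have "\<dots> = (\<Sum>j<c. \<Sum>i<r. cnj (x $ i) * A $$ (i,j) * y $ j)"
    by (rule sum.swap)
  also have "\<dots> = (\<Sum>j<c. cnj (\<Sum>i<r. cnj (A $$ (i,j)) * x $ i) * y $ j)"
    by (simp add: cnj_sum sum_distrib_left sum_distrib_right mult_ac)
  also have "\<dots> = cinner (cadj A *\<^sub>v x) y"
    using A x y by (simp add: cinner_def scalar_prod_def atLeast0LessThan)
  finally show ?thesis .
qed

lemma cinner_self: "cinner v v = complex_of_real (\<Sum>i<dim_vec v. (cmod (v $ i))\<^sup>2)"
proof -
  have e: "cnj z * z = complex_of_real ((cmod z)\<^sup>2)" for z
    by (simp only: complex_norm_square mult.commute)
  show ?thesis unfolding cinner_def of_real_sum e ..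
qed

lemma unit_vec_cinner: "unit_vec N v \<longleftrightarrow> v \<in> carrier_vec N \<and> cinner v v = 1"
proof -
  have "v \<in> carrier_vec N \<Longrightarrow> dim_vec v = N" by auto
  then show ?thesis unfolding unit_vec_def cinner_self of_real_eq_1_iff by metis
qed

lemma unitary_unit_vec:
  assumes T: "unitary_mat N T" and v: "unit_vec N v" shows "unit_vec N (T *\<^sub>v v)"
proof -
  have TC: "T \<in> carrier_mat N N" and 1: "cadj T * T = 1\<^sub>m N" using T unfolding unitary_mat_def by auto
  have vc: "v \<in> carrier_vec N" and vv: "cinner v v = 1" using v unit_vec_cinner by auto
  have Tv: "T *\<^sub>v v \<in> carrier_vec N" using TC vc by simp
  have "cinner (T *\<^sub>v v) (T *\<^sub>v v) = cinner (cadj T *\<^sub>v (T *\<^sub>v v)) v"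
    using cinner_mult[OF TC Tv vc] .
  also have "cadj T *\<^sub>v (T *\<^sub>v v) = (cadj T * T) *\<^sub>v v"
    by (rule assoc_mult_mat_vec[symmetric]) (use TC vc cadj_carrier in auto)
  also have "\<dots> = v" using 1 vc by simp
  finally show ?thesis using vv Tv unit_vec_cinner by auto
qed

lemma coeff_kron:
  assumes A: "A \<in> carrier_mat n n" and B: "B \<in> carrier_mat m m" and v: "v \<in> carrier_vec (n*m)"
  shows "coeff_mat n m (kron A B *\<^sub>v v) = A * coeff_mat n m v * transpose_mat B"
proof (rule eq_matI)
  fix i j assume i: "i < dim_row (A * coeff_mat n m v * transpose_mat B)" and
    j: "j < dim_col (A * coeff_mat n m v * transpose_mat B)"
  have i': "i < n" and j': "j < m" using i j A B by (auto simp: coeff_mat_def)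
  have ij: "i*m+j < n*m" using i' j' by (rule pair_lt)
  have "coeff_mat n m (kron A B *\<^sub>v v) $$ (i,j) = (\<Sum>x<n*m. kron A B $$ (i*m+j, x) * v $ x)"
    using ij i' j' A B v by (simp add: coeff_mat_def scalar_prod_def atLeast0LessThan)
  also have "\<dots> = (\<Sum>k<n. \<Sum>l<m. kron A B $$ (i*m+j, k*m+l) * v $ (k*m+l))"
    by (rule sum_split_nat)
  also have "\<dots> = (\<Sum>k<n. \<Sum>l<m. A $$ (i,k) * B $$ (j,l) * v $ (k*m+l))"
    using kron_index_pair[OF A B] i' j' by simp
  also have "\<dots> = (A * coeff_mat n m v * transpose_mat B) $$ (i,j)"
  proof -
    have "(A * coeff_mat n m v * transpose_mat B) $$ (i,j) =
      (\<Sum>l<m. (\<Sum>k<n. A $$ (i,k) * v $ (k*m+l)) * B $$ (j,l))"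
      using i' j' A B by (simp add: coeff_mat_def scalar_prod_def atLeast0LessThan)
    also have "\<dots> = (\<Sum>l<m. \<Sum>k<n. A $$ (i,k) * B $$ (j,l) * v $ (k*m+l))"
      by (simp add: sum_distrib_left sum_distrib_right mult_ac)
    also have "\<dots> = (\<Sum>k<n. \<Sum>l<m. A $$ (i,k) * B $$ (j,l) * v $ (k*m+l))"
      by (rule sum.swap)
    finally show ?thesis by simp
  qed
  finally show "coeff_mat n m (kron A B *\<^sub>v v) $$ (i,j) = (A * coeff_mat n m v * transpose_mat B) $$ (i,j)" .
qed (use A B in \<open>simp_all add: coeff_mat_def\<close>)

lemma coeff_carrier: "coeff_mat n m v \<in> carrier_mat n m"
  by (simp add: coeff_mat_def)

lemma schmidt_kron:
  assumes A: "unitary_mat n A" and B: "unitary_mat m B" and v: "v \<in> carrier_vec (n*m)"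
  shows "schmidt n m (kron A B *\<^sub>v v) = schmidt n m v"
proof -
  have Ac: "A \<in> carrier_mat n n" and A1: "A * cadj A = 1\<^sub>m n" "cadj A * A = 1\<^sub>m n"
    using A unfolding unitary_mat_def by auto
  have Bc: "B \<in> carrier_mat m m" using B unfolding unitary_mat_def by auto
  have BT: "transpose_mat B * cadj (transpose_mat B) = 1\<^sub>m m"
    using unitary_transpose[OF B] unfolding unitary_mat_def by auto
  define M where "M = coeff_mat n m v"
  have Mc: "M \<in> carrier_mat n m" unfolding M_def by (rule coeff_carrier)
  have BTc: "transpose_mat B \<in> carrier_mat m m" using Bc by simp
  have cAc: "cadj A \<in> carrier_mat n n" using Ac cadj_carrier by auto
  have cMc: "cadj M \<in> carrier_mat m n" using Mc cadj_carrier by auto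
  have cBTc: "cadj (transpose_mat B) \<in> carrier_mat m m" using BTc cadj_carrier by auto
  have AM: "A * M \<in> carrier_mat n m" using Ac Mc by simp
  have AMc: "A * M \<in> carrier_mat n m" using Ac Mc by simp
  have cMAc: "cadj M * cadj A \<in> carrier_mat m n" using cMc cAc by simp
  have "coeff_mat n m (kron A B *\<^sub>v v) * cadj (coeff_mat n m (kron A B *\<^sub>v v))
     = (A * M * transpose_mat B) * (cadj (transpose_mat B) * (cadj M * cadj A))"
    unfolding coeff_kron[OF Ac Bc v] M_def[symmetric]
    unfolding cadj_mult[OF AM BTc] cadj_mult[OF Ac Mc] ..
  also have "\<dots> = A * M * (transpose_mat B * (cadj (transpose_mat B) * (cadj M * cadj A)))"
    by (rule assoc_mult_mat[OF AMc BTc]) (use cBTc cMAc in \<open>simp only: carrier_mat_def, simp\<close>)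
  also have "transpose_mat B * (cadj (transpose_mat B) * (cadj M * cadj A)) = 
     (transpose_mat B * cadj (transpose_mat B)) * (cadj M * cadj A)"
    by (rule assoc_mult_mat[symmetric, OF BTc cBTc cMAc])
  also have "\<dots> = cadj M * cadj A" unfolding BT by (rule left_mult_one_mat[OF cMAc])
  also have "A * M * (cadj M * cadj A) = A * (M * (cadj M * cadj A))"
    by (rule assoc_mult_mat[OF Ac Mc cMAc])
  also have "M * (cadj M * cadj A) = (M * cadj M) * cadj A"
    by (rule assoc_mult_mat[symmetric, OF Mc cMc cAc])
  also have "A * (M * cadj M * cadj A) = A * (M * cadj M) * cadj A"
    by (rule assoc_mult_mat[symmetric, OF Ac _ cAc]) (use Mc cMc in simp)
  finally have eq: "coeff_mat n m (kron A B *\<^sub>v v) * cadj (coeff_mat n m (kron A B *\<^sub>v v)) = A * (M * cadj M) * cadj A" .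
  have MMc: "M * cadj M \<in> carrier_mat n n" using Mc cMc by simp
  have "similar_mat (A * (M * cadj M) * cadj A) (M * cadj M)"
    by (rule similar_matI[where P=A and Q="cadj A" and n=n]) (use Ac cAc MMc A1 in auto)
  hence "char_poly (A * (M * cadj M) * cadj A) = char_poly (M * cadj M)"
    by (rule char_poly_similar)
  then show ?thesis unfolding schmidt_def Let_def eq M_def by simp
qed

lemma admissible_kron:
  assumes A: "unitary_mat n A" and B: "unitary_mat m B" and v: "admissible n m \<alpha> v"
  shows "admissible n m \<alpha> (kron A B *\<^sub>v v)"
proof -
  have u: "unit_vec (n*m) v" using v unfolding admissible_def Let_def by auto
  hence vc: "v \<in> carrier_vec (n*m)" unfolding unit_vec_def by auto
  have "unit_vec (n*m) (kron A B *\<^sub>v v)" using unitary_unit_vec[OF unitary_kron[OF A B] u] .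
  moreover have "schmidt_coeff n m (kron A B *\<^sub>v v) = schmidt_coeff n m v"
    unfolding schmidt_coeff_def schmidt_kron[OF A B vc] ..
  ultimately show ?thesis using v unfolding admissible_def Let_def by simp
qed



definition local_unitary :: "nat \<Rightarrow> nat \<Rightarrow> complex mat \<Rightarrow> bool" where
  "local_unitary n m T \<longleftrightarrow> (\<exists>A B. unitary_mat n A \<and> unitary_mat m B \<and> T = kron A B)"

lemma local_unitary_cadj: "local_unitary n m T \<Longrightarrow> local_unitary n m (cadj T)"
  unfolding local_unitary_def using unitary_cadj cadj_kron by metis

lemma local_unitary_unitary: "local_unitary n m T \<Longrightarrow> unitary_mat (n*m) T"
  unfolding local_unitary_def using unitary_kron by metis

lemma local_unitary_carrier: "local_unitary n m T \<Longrightarrow> T \<in> carrier_mat (n*m) (n*m)"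
  using local_unitary_unitary unitary_mat_def by blast

lemma adm_local: "local_unitary n m T \<Longrightarrow> \<psi> \<in> V_adm n m \<alpha> \<Longrightarrow> T *\<^sub>v \<psi> \<in> V_adm n m \<alpha>"
  unfolding local_unitary_def V_adm_def using admissible_kron by blast

lemma V_adm_carrier: "\<psi> \<in> V_adm n m \<alpha> \<Longrightarrow> \<psi> \<in> carrier_vec (n*m)"
  unfolding V_adm_def admissible_def Let_def unit_vec_def by auto

lemma conj_back:
  assumes T: "unitary_mat N T" and W: "W \<in> carrier_mat N N"
  shows "cadj T * (T * W * cadj T) * cadj (cadj T) = W"
proof -
  have Tc: "T \<in> carrier_mat N N" and 1: "cadj T * T = 1\<^sub>m N" "T * cadj T = 1\<^sub>m N"
    using T unfolding unitary_mat_def by auto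
  have cT: "cadj T \<in> carrier_mat N N" using Tc cadj_carrier by auto
  have "cadj T * (T * W * cadj T) * cadj (cadj T) = cadj T * (T * W * cadj T) * T" by simp
  also have "\<dots> = (cadj T * T) * W * (cadj T * T)"
    using Tc cT W by (simp add: assoc_mult_mat[of _ N N _ N _ N])
  also have "\<dots> = W" unfolding 1 using W by simp
  finally show ?thesis .
qed

lemma BP_local:
  assumes T: "local_unitary n m T" and W: "W \<in> BP n m \<alpha>"
  shows "T * W * cadj T \<in> BP n m \<alpha>"
proof -
  let ?N = "n*m"
  have Tc: "T \<in> carrier_mat ?N ?N" using local_unitary_carrier[OF T] .
  have cT: "cadj T \<in> carrier_mat ?N ?N" using Tc cadj_carrier by auto
  have Wc: "W \<in> carrier_mat ?N ?N" and Wh: "cadj W = W"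
    using W unfolding BP_def hermitian_mat_def by auto
  have WcT: "W * cadj T \<in> carrier_mat ?N ?N" using Wc cT by simp
  have TW: "T * W \<in> carrier_mat ?N ?N" using Tc Wc by simp
  have "cadj (T * W * cadj T) = cadj (cadj T) * cadj (T * W)"
    by (rule cadj_mult[OF TW cT])
  also have "\<dots> = T * (W * cadj T)" using cadj_mult[OF Tc Wc] Wh by simp
  also have "\<dots> = T * W * cadj T" using assoc_mult_mat[OF Tc Wc cT] by simp
  finally have h: "hermitian_mat ?N (T * W * cadj T)"
    unfolding hermitian_mat_def using TW cT by simp
  have "Re (cinner \<psi> ((T * W * cadj T) *\<^sub>v \<psi>)) \<ge> 0" if p: "\<psi> \<in> V_adm n m \<alpha>" for \<psi>
  proof -
    have pc: "\<psi> \<in> carrier_vec ?N" using V_adm_carrier[OF p] .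
    have p': "cadj T *\<^sub>v \<psi> \<in> V_adm n m \<alpha>" using adm_local[OF local_unitary_cadj[OF T] p] .
    have "(T * W * cadj T) *\<^sub>v \<psi> = T *\<^sub>v (W *\<^sub>v (cadj T *\<^sub>v \<psi>))"
    proof -
      have cp: "cadj T *\<^sub>v \<psi> \<in> carrier_vec ?N" using cT pc by simp
      show ?thesis using assoc_mult_mat_vec[OF TW cT pc] assoc_mult_mat_vec[OF Tc Wc cp] by simp
    qed
    hence "cinner \<psi> ((T * W * cadj T) *\<^sub>v \<psi>) = cinner (cadj T *\<^sub>v \<psi>) (W *\<^sub>v (cadj T *\<^sub>v \<psi>))"
      using cinner_mult[OF Tc pc, of "W *\<^sub>v (cadj T *\<^sub>v \<psi>)"] Wc cT pc by simp
    then show ?thesis using W p' unfolding BP_def by simp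
  qed
  then show ?thesis using h unfolding BP_def by simp
qed

lemma BP_iff:
  assumes T: "local_unitary n m T" and W: "W \<in> carrier_mat (n*m) (n*m)"
  shows "T * W * cadj T \<in> BP n m \<alpha> \<longleftrightarrow> W \<in> BP n m \<alpha>"
  using BP_local[OF T] BP_local[OF local_unitary_cadj[OF T], of "T * W * cadj T"]
    conj_back[OF local_unitary_unitary[OF T] W] by auto

lemma triple_entry:
  assumes T: "T \<in> carrier_mat N N" and X: "X \<in> carrier_mat N N" and i: "i < N" and j: "j < N"
  shows "(T * X * cadj T) $$ (i,j) = (\<Sum>x<N. \<Sum>y<N. T $$ (i,x) * X $$ (x,y) * cnj (T $$ (j,y)))"
proof -
  have "(T * X * cadj T) $$ (i,j) = (\<Sum>y<N. (\<Sum>x<N. T $$ (i,x) * X $$ (x,y)) * cnj (T $$ (j,y)))"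
    using T X i j by (simp add: scalar_prod_def atLeast0LessThan)
  also have "\<dots> = (\<Sum>y<N. \<Sum>x<N. T $$ (i,x) * X $$ (x,y) * cnj (T $$ (j,y)))"
    by (simp add: sum_distrib_right)
  also have "\<dots> = (\<Sum>x<N. \<Sum>y<N. T $$ (i,x) * X $$ (x,y) * cnj (T $$ (j,y)))"
    by (rule sum.swap)
  finally show ?thesis .
qed

lemma outer_mult:
  assumes T: "T \<in> carrier_mat N N" and v: "v \<in> carrier_vec N"
  shows "outer (T *\<^sub>v v) (T *\<^sub>v v) = T * outer v v * cadj T"
proof (rule eq_matI)
  have oc: "outer v v \<in> carrier_mat N N" using v by (simp add: outer_def)
  fix i j assume i: "i < dim_row (T * outer v v * cadj T)" and j: "j < dim_col (T * outer v v * cadj T)"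
  have i': "i < N" and j': "j < N" using i j T by auto
  have "(T * outer v v * cadj T) $$ (i,j) = (\<Sum>x<N. \<Sum>y<N. T $$ (i,x) * (v $ x * cnj (v $ y)) * cnj (T $$ (j,y)))"
    unfolding triple_entry[OF T oc i' j'] using v by (simp add: outer_def)
  also have "\<dots> = (\<Sum>x<N. T $$ (i,x) * v $ x) * cnj (\<Sum>y<N. T $$ (j,y) * v $ y)"
    by (simp add: sum_product cnj_sum mult_ac)
  also have "\<dots> = outer (T *\<^sub>v v) (T *\<^sub>v v) $$ (i,j)"
    using i' j' T v by (simp add: outer_def scalar_prod_def atLeast0LessThan)
  finally show "outer (T *\<^sub>v v) (T *\<^sub>v v) $$ (i,j) = (T * outer v v * cadj T) $$ (i,j)" by simp
qed (use T v in \<open>simp_all add: outer_def\<close>)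



lemma dist3: "(a::complex) * (\<Sum>l\<in>S. f l * g l) * b = (\<Sum>l\<in>S. f l * (a * g l * b))"
  by (simp add: sum_distrib_left sum_distrib_right mult_ac)

lemma cone_local:
  assumes T: "local_unitary n m T" and X: "X \<in> cone_gen n m \<alpha>"
  shows "T * X * cadj T \<in> cone_gen n m \<alpha>"
proof -
  let ?N = "n*m"
  have Tc: "T \<in> carrier_mat ?N ?N" using local_unitary_carrier[OF T] .
  obtain K :: nat and c \<psi>s where h: "\<forall>l<K. c l \<ge> 0 \<and> \<psi>s l \<in> V_adm n m \<alpha>"
    and Xe: "X = mat ?N ?N (\<lambda>(a,b). \<Sum>l<K. complex_of_real (c l) * outer (\<psi>s l) (\<psi>s l) $$ (a,b))"
    using X unfolding cone_gen_def mem_Collect_eq by (elim exE conjE) blast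
  have Xc: "X \<in> carrier_mat ?N ?N" using Xe by simp
  have pc: "l < K \<Longrightarrow> \<psi>s l \<in> carrier_vec ?N" for l using h V_adm_carrier by blast
  have dv: "dim_vec (\<psi>s l) = ?N" if "l < K" for l using pc[OF that] by auto
  have oc: "l < K \<Longrightarrow> outer (\<psi>s l) (\<psi>s l) \<in> carrier_mat ?N ?N" for l using dv by (simp add: outer_def)
  have "T * X * cadj T = mat ?N ?N (\<lambda>(a,b). \<Sum>l<K. complex_of_real (c l) * outer (T *\<^sub>v \<psi>s l) (T *\<^sub>v \<psi>s l) $$ (a,b))"
  proof (rule eq_matI)
    fix i j assume i: "i < dim_row (mat ?N ?N (\<lambda>(a,b). \<Sum>l<K. complex_of_real (c l) * outer (T *\<^sub>v \<psi>s l) (T *\<^sub>v \<psi>s l) $$ (a,b)))"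
      and j: "j < dim_col (mat ?N ?N (\<lambda>(a,b). \<Sum>l<K. complex_of_real (c l) * outer (T *\<^sub>v \<psi>s l) (T *\<^sub>v \<psi>s l) $$ (a,b)))"
    have i': "i < ?N" and j': "j < ?N" using i j by auto
    have "(T * X * cadj T) $$ (i,j) = (\<Sum>x<?N. \<Sum>y<?N. T $$ (i,x) * (\<Sum>l<K. complex_of_real (c l) * outer (\<psi>s l) (\<psi>s l) $$ (x,y)) * cnj (T $$ (j,y)))"
      unfolding triple_entry[OF Tc Xc i' j'] by (intro sum.cong refl) (simp add: Xe)
    also have "\<dots> = (\<Sum>x<?N. \<Sum>y<?N. \<Sum>l<K. complex_of_real (c l) * (T $$ (i,x) * outer (\<psi>s l) (\<psi>s l) $$ (x,y) * cnj (T $$ (j,y))))"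
      by (intro sum.cong refl) (rule dist3)
    also have "\<dots> = (\<Sum>x<?N. \<Sum>l<K. \<Sum>y<?N. complex_of_real (c l) * (T $$ (i,x) * outer (\<psi>s l) (\<psi>s l) $$ (x,y) * cnj (T $$ (j,y))))"
      by (rule sum.cong[OF refl], rule sum.swap)
    also have "\<dots> = (\<Sum>l<K. \<Sum>x<?N. \<Sum>y<?N. complex_of_real (c l) * (T $$ (i,x) * outer (\<psi>s l) (\<psi>s l) $$ (x,y) * cnj (T $$ (j,y))))"
      by (rule sum.swap)
    also have "\<dots> = (\<Sum>l<K. complex_of_real (c l) * (T * outer (\<psi>s l) (\<psi>s l) * cadj T) $$ (i,j))"
    proof (intro sum.cong refl)
      fix l assume "l \<in> {..<K}"
      then show "(\<Sum>x<?N. \<Sum>y<?N. complex_of_real (c l) * (T $$ (i,x) * outer (\<psi>s l) (\<psi>s l) $$ (x,y) * cnj (T $$ (j,y))))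
        = complex_of_real (c l) * (T * outer (\<psi>s l) (\<psi>s l) * cadj T) $$ (i,j)"
        using triple_entry[OF Tc oc[of l] i' j'] by (simp add: sum_distrib_left)
    qed
    also have "\<dots> = (\<Sum>l<K. complex_of_real (c l) * outer (T *\<^sub>v \<psi>s l) (T *\<^sub>v \<psi>s l) $$ (i,j))"
    proof (intro sum.cong refl)
      fix l assume "l \<in> {..<K}"
      then show "complex_of_real (c l) * (T * outer (\<psi>s l) (\<psi>s l) * cadj T) $$ (i,j) =
        complex_of_real (c l) * outer (T *\<^sub>v \<psi>s l) (T *\<^sub>v \<psi>s l) $$ (i,j)"
        using outer_mult[OF Tc pc[of l]] by simp
    qed
    finally show "(T * X * cadj T) $$ (i,j) = mat ?N ?N (\<lambda>(a,b). \<Sum>l<K. complex_of_real (c l) * outer (T *\<^sub>v \<psi>s l) (T *\<^sub>v \<psi>s l) $$ (a,b)) $$ (i,j)"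
      using i' j' by simp
  qed (use Tc Xc in auto)
  moreover have "\<forall>l<K. c l \<ge> 0 \<and> T *\<^sub>v \<psi>s l \<in> V_adm n m \<alpha>" using h adm_local[OF T] by blast
  ultimately show ?thesis unfolding cone_gen_def mem_Collect_eq
    by (intro exI[of _ K] exI[of _ c] exI[of _ "\<lambda>l. T *\<^sub>v \<psi>s l"] conjI)
qed



lemma K_local:
  assumes T: "local_unitary n m T" and W: "W \<in> K_cone n m \<alpha>"
  shows "T * W * cadj T \<in> K_cone n m \<alpha>"
proof -
  let ?N = "n*m"
  have Tc: "T \<in> carrier_mat ?N ?N" using local_unitary_carrier[OF T] .
  have Wc: "W \<in> carrier_mat ?N ?N" using W unfolding K_cone_def by simp
  define Mx where "Mx = 1 + (\<Sum>a<?N. \<Sum>x<?N. cmod (T $$ (a,x)))"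
  have Mx0: "Mx \<ge> 1" unfolding Mx_def by (simp add: sum_nonneg)
  have TM: "cmod (T $$ (a,x)) \<le> Mx" if "a < ?N" "x < ?N" for a x
  proof -
    have "cmod (T $$ (a,x)) \<le> (\<Sum>x'<?N. cmod (T $$ (a,x')))"
      using that by (intro member_le_sum) auto
    also have "\<dots> \<le> (\<Sum>a'<?N. \<Sum>x'<?N. cmod (T $$ (a',x')))"
      using that by (intro member_le_sum[where f="\<lambda>a'. \<Sum>x'<?N. cmod (T $$ (a',x'))"]) (auto intro: sum_nonneg)
    finally show ?thesis unfolding Mx_def by simp
  qed
  define D where "D = real (?N * ?N) * Mx * Mx"
  have D0: "D \<ge> 0" unfolding D_def using Mx0 by simp
  have ex: "\<exists>X' \<in> cone_gen n m \<alpha>. \<forall>a < ?N. \<forall>b < ?N. cmod (X' $$ (a,b) - (T * W * cadj T) $$ (a,b)) < \<epsilon>"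
    if e: "\<epsilon> > 0" for \<epsilon>
  proof -
    define e' where "e' = \<epsilon> / (D + 1)"
    have e'0: "e' > 0" unfolding e'_def using e D0 by simp
    obtain X where X: "X \<in> cone_gen n m \<alpha>" and Xa: "\<forall>a < ?N. \<forall>b < ?N. cmod (X $$ (a,b) - W $$ (a,b)) < e'"
      using W e'0 unfolding K_cone_def mem_Collect_eq by (elim conjE allE[of _ e'] impE) auto
    have Xc: "X \<in> carrier_mat ?N ?N" using X unfolding cone_gen_def by auto
    have "cmod ((T * X * cadj T) $$ (a,b) - (T * W * cadj T) $$ (a,b)) < \<epsilon>" if ab: "a < ?N" "b < ?N" for a b
    proof -
      have "(T * X * cadj T) $$ (a,b) - (T * W * cadj T) $$ (a,b) =
        (\<Sum>x<?N. \<Sum>y<?N. T $$ (a,x) * (X $$ (x,y) - W $$ (x,y)) * cnj (T $$ (b,y)))"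
        unfolding triple_entry[OF Tc Xc ab] triple_entry[OF Tc Wc ab]
        by (simp add: sum_subtractf[symmetric] algebra_simps)
      also have "cmod \<dots> \<le> (\<Sum>x<?N. \<Sum>y<?N. cmod (T $$ (a,x) * (X $$ (x,y) - W $$ (x,y)) * cnj (T $$ (b,y))))"
        by (rule order_trans[OF norm_sum sum_mono[OF norm_sum]])
      also have "\<dots> \<le> (\<Sum>x<?N. \<Sum>y<?N. Mx * e' * Mx)"
      proof (intro sum_mono)
        fix x y assume x: "x \<in> {..<?N}" and y: "y \<in> {..<?N}"
        have "cmod (T $$ (a,x) * (X $$ (x,y) - W $$ (x,y)) * cnj (T $$ (b,y)))
          = cmod (T $$ (a,x)) * cmod (X $$ (x,y) - W $$ (x,y)) * cmod (T $$ (b,y))"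
          by (simp add: norm_mult)
        also have "\<dots> \<le> Mx * e' * Mx"
          using TM[OF ab(1)] TM[OF ab(2)] x y Xa e'0 Mx0
          by (intro mult_mono) (auto intro: less_imp_le)
        finally show "cmod (T $$ (a,x) * (X $$ (x,y) - W $$ (x,y)) * cnj (T $$ (b,y))) \<le> Mx * e' * Mx" .
      qed
      also have "\<dots> = D * e'" unfolding D_def by (simp add: algebra_simps)
      also have "\<dots> < \<epsilon>" unfolding e'_def using D0 e by (simp add: field_simps)
      finally show ?thesis .
    qed
    then show ?thesis using cone_local[OF T X] by (intro bexI[of _ "T * X * cadj T"]) auto
  qed
  have cT: "cadj T \<in> carrier_mat ?N ?N" using Tc cadj_carrier by auto
  have cc: "T * W * cadj T \<in> carrier_mat ?N ?N" using mult_carrier_mat[OF mult_carrier_mat[OF Tc Wc] cT] .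
  show ?thesis unfolding K_cone_def mem_Collect_eq
    apply (intro conjI allI impI)
     apply (rule cc)
    apply (erule ex)
    done
qed

lemma K_iff:
  assumes T: "local_unitary n m T" and W: "W \<in> carrier_mat (n*m) (n*m)"
  shows "T * W * cadj T \<in> K_cone n m \<alpha> \<longleftrightarrow> W \<in> K_cone n m \<alpha>"
  using K_local[OF T] K_local[OF local_unitary_cadj[OF T], of "T * W * cadj T"]
    conj_back[OF local_unitary_unitary[OF T] W] by auto



lemma sum_delta2:
  fixes f :: "nat \<Rightarrow> nat \<Rightarrow> complex"
  assumes "p < n" "r < n"
  shows "(\<Sum>x<n. \<Sum>y<n. (if x = p \<and> y = r then 1 else 0) * f x y) = f p r"
proof -
  have if_mult1: "(if P then 1 else 0) * z = (if P then z else 0)" for P and z :: complex by simp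
  have "(\<Sum>y<n. (if x = p \<and> y = r then 1 else 0) * f x y) = (if x = p then f x r else 0)" for x
    using assms by (cases "x = p") (simp_all add: if_mult1)
  hence "(\<Sum>x<n. \<Sum>y<n. (if x = p \<and> y = r then 1 else 0) * f x y) =
        (\<Sum>x<n. if x = p then f x r else 0)"
    by simp
  also have "\<dots> = f p r" using assms by simp
  finally show ?thesis .
qed

lemma matunit_carrier: "matunit n i j \<in> carrier_mat n n"
  by (simp add: matunit_def)

lemma matunit_index: "a < n \<Longrightarrow> b < n \<Longrightarrow> matunit n i j $$ (a,b) = (if a = i \<and> b = j then 1 else 0)"
  by (simp add: matunit_def)

lemma linear_zero:
  assumes L: "linear_map n m \<Phi>" shows "\<Phi> (0\<^sub>m n n) = 0\<^sub>m m m"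
proof -
  have z: "0\<^sub>m n n \<in> carrier_mat n n" by simp
  have "\<Phi> (0\<^sub>m n n) = \<Phi> (0 \<cdot>\<^sub>m 0\<^sub>m n n)" by simp
  also have "\<dots> = 0 \<cdot>\<^sub>m \<Phi> (0\<^sub>m n n)" using L z unfolding linear_map_def by blast
  also have "\<dots> = 0\<^sub>m m m"
  proof -
    have c: "\<Phi> (0\<^sub>m n n) \<in> carrier_mat m m" using L z unfolding linear_map_def by blast
    show ?thesis using c by (intro eq_matI) auto
  qed
  finally show ?thesis .
qed

lemma expand_partial:
  assumes L: "linear_map n m \<Phi>" and A: "A \<in> carrier_mat n n"
    and S: "finite S" "S \<subseteq> {..<n} \<times> {..<n}"
  shows "\<Phi> (mat n n (\<lambda>(a,b). if (a,b) \<in> S then A $$ (a,b) else 0)) =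
    mat m m (\<lambda>(x,y). \<Sum>p\<in>S. A $$ p * \<Phi> (matunit n (fst p) (snd p)) $$ (x,y))"
  using S
proof (induction S rule: finite_induct)
  case empty
  have "mat n n (\<lambda>(a,b). if (a,b) \<in> {} then A $$ (a,b) else 0) = 0\<^sub>m n n"
    by (intro eq_matI) auto
  show ?case unfolding \<open>mat n n (\<lambda>(a,b). if (a,b) \<in> {} then A $$ (a,b) else 0) = 0\<^sub>m n n\<close> linear_zero[OF L]
    by (intro eq_matI) auto
next
  case (insert p S)
  obtain a0 b0 where p: "p = (a0,b0)" by force
  have pS: "(a0,b0) \<notin> S" using insert.hyps p by simp
  have fS: "finite S" using insert.hyps by simp
  have Ssub: "S \<subseteq> {..<n} \<times> {..<n}" using insert.prems by simp
  have IH: "\<Phi> (mat n n (\<lambda>(a,b). if (a,b) \<in> S then A $$ (a,b) else 0)) =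
    mat m m (\<lambda>(x,y). \<Sum>p\<in>S. A $$ p * \<Phi> (matunit n (fst p) (snd p)) $$ (x,y))"
    using insert.IH Ssub by blast
  let ?P = "mat n n (\<lambda>(a,b). if (a,b) \<in> S then A $$ (a,b) else 0)"
  have Pc: "?P \<in> carrier_mat n n" by simp
  have Ec: "A $$ (a0,b0) \<cdot>\<^sub>m matunit n a0 b0 \<in> carrier_mat n n" by (simp add: matunit_def)
  have add: "\<forall>A\<in>carrier_mat n n. \<forall>B\<in>carrier_mat n n. \<Phi> (A + B) = \<Phi> A + \<Phi> B"
    and smul: "\<forall>A\<in>carrier_mat n n. \<forall>c. \<Phi> (c \<cdot>\<^sub>m A) = c \<cdot>\<^sub>m \<Phi> A"
    and car: "\<forall>A\<in>carrier_mat n n. \<Phi> A \<in> carrier_mat m m"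
    using L unfolding linear_map_def by auto
  have eq: "mat n n (\<lambda>(a,b). if (a,b) \<in> insert p S then A $$ (a,b) else 0) = A $$ (a0,b0) \<cdot>\<^sub>m matunit n a0 b0 + ?P"
  proof (rule eq_matI)
    fix i j assume "i < dim_row (A $$ (a0,b0) \<cdot>\<^sub>m matunit n a0 b0 + ?P)" "j < dim_col (A $$ (a0,b0) \<cdot>\<^sub>m matunit n a0 b0 + ?P)"
    hence ij: "i < n" "j < n" by (auto simp: matunit_def)
    show "mat n n (\<lambda>(a,b). if (a,b) \<in> insert p S then A $$ (a,b) else 0) $$ (i,j) = (A $$ (a0,b0) \<cdot>\<^sub>m matunit n a0 b0 + ?P) $$ (i,j)"
      using ij pS unfolding p by (cases "i = a0 \<and> j = b0") (auto simp: matunit_def)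
  qed (simp_all add: matunit_def)
  have Ec2: "\<Phi> (matunit n a0 b0) \<in> carrier_mat m m" using car matunit_carrier by blast
  have "\<Phi> (mat n n (\<lambda>(a,b). if (a,b) \<in> insert p S then A $$ (a,b) else 0)) =
     \<Phi> (A $$ (a0,b0) \<cdot>\<^sub>m matunit n a0 b0) + \<Phi> ?P"
    unfolding eq using add Ec Pc by blast
  also have "\<Phi> (A $$ (a0,b0) \<cdot>\<^sub>m matunit n a0 b0) = A $$ (a0,b0) \<cdot>\<^sub>m \<Phi> (matunit n a0 b0)"
    using smul matunit_carrier by blast
  also have "A $$ (a0,b0) \<cdot>\<^sub>m \<Phi> (matunit n a0 b0) + \<Phi> ?P = mat m m (\<lambda>(x,y). \<Sum>q\<in>insert p S. A $$ q * \<Phi> (matunit n (fst q) (snd q)) $$ (x,y))"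
    unfolding IH p using Ec2 pS fS by (intro eq_matI) simp_all
  finally show ?case .
qed

lemma expand:
  assumes L: "linear_map n m \<Phi>" and A: "A \<in> carrier_mat n n" and x: "x < m" and y: "y < m"
  shows "\<Phi> A $$ (x,y) = (\<Sum>c<n. \<Sum>d<n. A $$ (c,d) * \<Phi> (matunit n c d) $$ (x,y))"
proof -
  have "A = mat n n (\<lambda>(a,b). if (a,b) \<in> {..<n} \<times> {..<n} then A $$ (a,b) else 0)"
    using A by (intro eq_matI) auto
  hence "\<Phi> A = mat m m (\<lambda>(x,y). \<Sum>p\<in>{..<n} \<times> {..<n}. A $$ p * \<Phi> (matunit n (fst p) (snd p)) $$ (x,y))"
    using expand_partial[OF L A, of "{..<n} \<times> {..<n}"] by simp
  hence "\<Phi> A $$ (x,y) = (\<Sum>p\<in>{..<n} \<times> {..<n}. A $$ p * \<Phi> (matunit n (fst p) (snd p)) $$ (x,y))"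
    using x y by simp
  also have "\<dots> = (\<Sum>c<n. \<Sum>d<n. A $$ (c,d) * \<Phi> (matunit n c d) $$ (x,y))"
    by (simp add: sum.cartesian_product case_prod_beta)
  finally show ?thesis .
qed

lemma choi_entry:
  assumes L: "linear_map n m \<Phi>" and pr: "p < n" "r < n" and qs: "q < m" "s < m"
  shows "choi n m \<Phi> $$ (p*m+q, r*m+s) = \<Phi> (matunit n p r) $$ (q,s)"
proof -
  have i: "p*m+q < n*m" "r*m+s < n*m" using pr qs by (auto intro: pair_lt)
  have Ec: "\<Phi> (matunit n a b) \<in> carrier_mat m m" for a b using L matunit_carrier unfolding linear_map_def by blast
  have "choi n m \<Phi> $$ (p*m+q, r*m+s) = (\<Sum>a<n. \<Sum>b<n. kron (matunit n a b) (\<Phi> (matunit n a b)) $$ (p*m+q, r*m+s))"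
    unfolding choi_def gen_choi_def using i by simp
  also have "\<dots> = (\<Sum>a<n. \<Sum>b<n. (if a = p \<and> b = r then 1 else 0) * \<Phi> (matunit n a b) $$ (q,s))"
    by (intro sum.cong refl) (auto simp: kron_index_pair[OF matunit_carrier Ec pr qs] matunit_index pr)
  also have "\<dots> = \<Phi> (matunit n p r) $$ (q,s)" by (rule sum_delta2[OF pr])
  finally show ?thesis .
qed



lemma swap4:
  fixes f :: "nat \<Rightarrow> nat \<Rightarrow> nat \<Rightarrow> nat \<Rightarrow> 'a::comm_monoid_add"
  shows "(\<Sum>x\<in>A. \<Sum>y\<in>B. \<Sum>c\<in>C. \<Sum>d\<in>D. f x y c d) = (\<Sum>c\<in>C. \<Sum>d\<in>D. \<Sum>x\<in>A. \<Sum>y\<in>B. f x y c d)"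
proof -
  have "(\<Sum>x\<in>A. \<Sum>y\<in>B. \<Sum>c\<in>C. \<Sum>d\<in>D. f x y c d) = (\<Sum>x\<in>A. \<Sum>c\<in>C. \<Sum>y\<in>B. \<Sum>d\<in>D. f x y c d)"
    by (rule sum.cong[OF refl], rule sum.swap)
  also have "\<dots> = (\<Sum>x\<in>A. \<Sum>c\<in>C. \<Sum>d\<in>D. \<Sum>y\<in>B. f x y c d)"
    by (rule sum.cong[OF refl], rule sum.cong[OF refl], rule sum.swap)
  also have "\<dots> = (\<Sum>c\<in>C. \<Sum>x\<in>A. \<Sum>d\<in>D. \<Sum>y\<in>B. f x y c d)"
    by (rule sum.swap)
  also have "\<dots> = (\<Sum>c\<in>C. \<Sum>d\<in>D. \<Sum>x\<in>A. \<Sum>y\<in>B. f x y c d)"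
    by (rule sum.cong[OF refl], rule sum.swap)
  finally show ?thesis .
qed

lemma choi_entry':
  assumes Ec: "\<And>a b. \<Phi> (matunit n a b) \<in> carrier_mat m m" and pr: "p < n" "r < n" and qs: "q < m" "s < m"
  shows "choi n m \<Phi> $$ (p*m+q, r*m+s) = \<Phi> (matunit n p r) $$ (q,s)"
proof -
  have i: "p*m+q < n*m" "r*m+s < n*m" using pr qs by (auto intro: pair_lt)
  have "choi n m \<Phi> $$ (p*m+q, r*m+s) = (\<Sum>a<n. \<Sum>b<n. kron (matunit n a b) (\<Phi> (matunit n a b)) $$ (p*m+q, r*m+s))"
    unfolding choi_def gen_choi_def using i by simp
  also have "\<dots> = (\<Sum>a<n. \<Sum>b<n. (if a = p \<and> b = r then 1 else 0) * \<Phi> (matunit n a b) $$ (q,s))"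
    by (intro sum.cong refl) (auto simp: kron_index_pair[OF matunit_carrier Ec pr qs] matunit_index pr)
  also have "\<dots> = \<Phi> (matunit n p r) $$ (q,s)" by (rule sum_delta2[OF pr])
  finally show ?thesis .
qed

lemma choi_carrier: "choi n m \<Phi> \<in> carrier_mat (n*m) (n*m)"
  by (simp add: choi_def gen_choi_def)

lemma gen_choi_carrier: "gen_choi n m E \<Phi> \<in> carrier_mat (n*m) (n*m)"
  by (simp add: gen_choi_def)

lemma conj_entry:
  assumes L: "linear_map n m \<Phi>" and G: "G \<in> carrier_mat n n" and U: "U \<in> carrier_mat m m"
    and pr: "p < n" "r < n" and qs: "q < m" "s < m"
  shows "(kron G U * choi n m \<Phi> * cadj (kron G U)) $$ (p*m+q, r*m+s) =
    (\<Sum>c<n. \<Sum>d<n. \<Sum>x<m. \<Sum>y<m. G $$ (p,c) * cnj (G $$ (r,d)) * U $$ (q,x) * cnj (U $$ (s,y)) * \<Phi> (matunit n c d) $$ (x,y))"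
proof -
  let ?T = "kron G U"
  have Tc: "?T \<in> carrier_mat (n*m) (n*m)" using kron_carrier[OF G U] .
  have i: "p*m+q < n*m" "r*m+s < n*m" using pr qs by (auto intro: pair_lt)
  have Ec: "\<Phi> (matunit n a b) \<in> carrier_mat m m" for a b using L matunit_carrier unfolding linear_map_def by blast
  have "(?T * choi n m \<Phi> * cadj ?T) $$ (p*m+q, r*m+s) =
    (\<Sum>a<n*m. \<Sum>b<n*m. ?T $$ (p*m+q, a) * choi n m \<Phi> $$ (a,b) * cnj (?T $$ (r*m+s, b)))"
    by (rule triple_entry[OF Tc choi_carrier i])
  also have "\<dots> = (\<Sum>c<n. \<Sum>x<m. \<Sum>d<n. \<Sum>y<m. ?T $$ (p*m+q, c*m+x) * choi n m \<Phi> $$ (c*m+x,d*m+y) * cnj (?T $$ (r*m+s, d*m+y)))"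
    by (simp only: sum_split_nat)
  also have "\<dots> = (\<Sum>c<n. \<Sum>x<m. \<Sum>d<n. \<Sum>y<m. G $$ (p,c) * cnj (G $$ (r,d)) * U $$ (q,x) * cnj (U $$ (s,y)) * \<Phi> (matunit n c d) $$ (x,y))"
  proof (intro sum.cong refl)
    fix c x d y assume "c \<in> {..<n}" "x \<in> {..<m}" "d \<in> {..<n}" "y \<in> {..<m}"
    hence c: "c < n" "d < n" "x < m" "y < m" by auto
    show "?T $$ (p*m+q, c*m+x) * choi n m \<Phi> $$ (c*m+x,d*m+y) * cnj (?T $$ (r*m+s, d*m+y)) =
      G $$ (p,c) * cnj (G $$ (r,d)) * U $$ (q,x) * cnj (U $$ (s,y)) * \<Phi> (matunit n c d) $$ (x,y)"
      unfolding kron_index_pair[OF G U pr(1) c(1) qs(1) c(3)] kron_index_pair[OF G U pr(2) c(2) qs(2) c(4)]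
        choi_entry'[where \<Phi>=\<Phi> and n=n and m=m, OF Ec c(1) c(2) c(3) c(4)]
      by (simp add: mult_ac)
  qed
  also have "\<dots> = (\<Sum>c<n. \<Sum>d<n. \<Sum>x<m. \<Sum>y<m. G $$ (p,c) * cnj (G $$ (r,d)) * U $$ (q,x) * cnj (U $$ (s,y)) * \<Phi> (matunit n c d) $$ (x,y))"
    by (rule sum.cong[OF refl], rule sum.swap)
  finally show ?thesis .
qed

lemma ad_unit:
  assumes V: "V \<in> carrier_mat n n" and pr: "p < n" "r < n" and cd: "c < n" "d < n"
  shows "(V * matunit n p r * cadj V) $$ (c,d) = V $$ (c,p) * cnj (V $$ (d,r))"
proof -
  have "(V * matunit n p r * cadj V) $$ (c,d) = (\<Sum>x<n. \<Sum>y<n. V $$ (c,x) * matunit n p r $$ (x,y) * cnj (V $$ (d,y)))"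
    by (rule triple_entry[OF V matunit_carrier cd])
  also have "\<dots> = (\<Sum>x<n. \<Sum>y<n. (if x = p \<and> y = r then 1 else 0) * (V $$ (c,x) * cnj (V $$ (d,y))))"
    by (intro sum.cong refl) (simp add: matunit_index)
  also have "\<dots> = V $$ (c,p) * cnj (V $$ (d,r))" by (rule sum_delta2[OF pr])
  finally show ?thesis .
qed

lemma unitary_mult: assumes A: "unitary_mat N A" and B: "unitary_mat N B" shows "unitary_mat N (A * B)"
proof -
  have Ac: "A \<in> carrier_mat N N" and A1: "A * cadj A = 1\<^sub>m N" "cadj A * A = 1\<^sub>m N"
    and Bc: "B \<in> carrier_mat N N" and B1: "B * cadj B = 1\<^sub>m N" "cadj B * B = 1\<^sub>m N"
    using A B unfolding unitary_mat_def by auto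
  have cA: "cadj A \<in> carrier_mat N N" and cB: "cadj B \<in> carrier_mat N N" using Ac Bc cadj_carrier by auto
  have "A * B * cadj (A * B) = A * (B * cadj B) * cadj A"
    unfolding cadj_mult[OF Ac Bc] using Ac Bc cA cB by (simp add: assoc_mult_mat[of _ N N _ N _ N])
  hence 1: "A * B * cadj (A * B) = 1\<^sub>m N" using A1 B1 Ac by simp
  have "cadj (A * B) * (A * B) = cadj B * (cadj A * A) * B"
    unfolding cadj_mult[OF Ac Bc] using Ac Bc cA cB by (simp add: assoc_mult_mat[of _ N N _ N _ N])
  hence 2: "cadj (A * B) * (A * B) = 1\<^sub>m N" using A1 B1 right_mult_one_mat[OF cB] by simp
  show ?thesis unfolding unitary_mat_def using 1 2 Ac Bc by simp
qed

lemma herm_conj: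
  assumes H: "hermitian_mat N A" and P: "P \<in> carrier_mat M N"
  shows "hermitian_mat M (P * A * cadj P)"
proof -
  have Ac: "A \<in> carrier_mat N N" and Ah: "cadj A = A" using H unfolding hermitian_mat_def by auto
  have cP: "cadj P \<in> carrier_mat N M" using P cadj_carrier by auto
  have PA: "P * A \<in> carrier_mat M N" using P Ac by simp
  have "cadj (P * A * cadj P) = cadj (cadj P) * cadj (P * A)" by (rule cadj_mult[OF PA cP])
  also have "\<dots> = P * (A * cadj P)" using cadj_mult[OF P Ac] Ah by simp
  also have "\<dots> = P * A * cadj P" using assoc_mult_mat[OF P Ac cP] by simp
  finally show ?thesis unfolding hermitian_mat_def using PA cP by simp
qed



lemma cadj_carrier2: "A \<in> carrier_mat r c \<Longrightarrow> cadj A \<in> carrier_mat c r"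
  unfolding carrier_mat_def cadj_def by auto

lemma conj_carrier: assumes "U \<in> carrier_mat m m" shows "U * Y * cadj U \<in> carrier_mat m m"
proof (rule carrier_matI)
  show "dim_row (U * Y * cadj U) = m" using assms by simp
  show "dim_col (U * Y * cadj U) = m" using assms by simp
qed

lemma idx_decomp: "i < n*m \<Longrightarrow> i = (i div m) * m + i mod m \<and> i div m < n \<and> i mod m < (m::nat)"
  using div_lt mod_lt by simp

lemma choi_comp:
  assumes L: "linear_map n m \<Phi>" and U: "U \<in> carrier_mat m m" and V: "V \<in> carrier_mat n n"
  shows "choi n m (\<lambda>X. Ad U (\<Phi> (Ad V X))) = kron (transpose_mat V) U * choi n m \<Phi> * cadj (kron (transpose_mat V) U)"
proof (rule eq_matI)
  let ?T = "kron (transpose_mat V) U"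
  have VT: "transpose_mat V \<in> carrier_mat n n" using V by simp
  have Tc: "?T \<in> carrier_mat (n*m) (n*m)" using kron_carrier[OF VT U] .
  have cT: "cadj ?T \<in> carrier_mat (n*m) (n*m)" using cadj_carrier2[OF Tc] .
  have RC: "?T * choi n m \<Phi> * cadj ?T \<in> carrier_mat (n*m) (n*m)"
    using mult_carrier_mat[OF mult_carrier_mat[OF Tc choi_carrier] cT] .
  show "dim_row (choi n m (\<lambda>X. Ad U (\<Phi> (Ad V X)))) = dim_row (?T * choi n m \<Phi> * cadj ?T)"
    "dim_col (choi n m (\<lambda>X. Ad U (\<Phi> (Ad V X)))) = dim_col (?T * choi n m \<Phi> * cadj ?T)"
    using carrier_matD[OF RC] carrier_matD[OF choi_carrier, of n m "\<lambda>X. Ad U (\<Phi> (Ad V X))"] by (simp_all only:)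
  fix i j assume "i < dim_row (?T * choi n m \<Phi> * cadj ?T)" "j < dim_col (?T * choi n m \<Phi> * cadj ?T)"
  hence "i < n*m" "j < n*m" using carrier_matD[OF RC] by (simp_all only:)
  then obtain p q r s where ip: "i = p*m+q" and jp: "j = r*m+s" and pr: "p < n" "r < n" and qs: "q < m" "s < m"
    using idx_decomp by metis
  have Ec: "\<Phi> (matunit n a b) \<in> carrier_mat m m" for a b using L matunit_carrier unfolding linear_map_def by blast
  let ?Y = "V * matunit n p r * cadj V"
  have Yc: "?Y \<in> carrier_mat n n" using mult_carrier_mat[OF mult_carrier_mat[OF V matunit_carrier] cadj_carrier2[OF V]] .
  have PYc: "\<Phi> ?Y \<in> carrier_mat m m" using L Yc unfolding linear_map_def by blast
  have AdC: "Ad U (\<Phi> (Ad V (matunit n a b))) \<in> carrier_mat m m" for a b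
    unfolding Ad_def by (rule conj_carrier[OF U])
  have "choi n m (\<lambda>X. Ad U (\<Phi> (Ad V X))) $$ (i,j) = Ad U (\<Phi> (Ad V (matunit n p r))) $$ (q,s)"
    unfolding ip jp by (rule choi_entry'[where \<Phi>="\<lambda>X. Ad U (\<Phi> (Ad V X))", OF AdC pr(1) pr(2) qs])
  also have "\<dots> = (U * \<Phi> ?Y * cadj U) $$ (q,s)" unfolding Ad_def ..
  also have "\<dots> = (\<Sum>x<m. \<Sum>y<m. U $$ (q,x) * \<Phi> ?Y $$ (x,y) * cnj (U $$ (s,y)))"
    by (rule triple_entry[OF U PYc qs])
  also have "\<dots> = (\<Sum>x<m. \<Sum>y<m. \<Sum>c<n. \<Sum>d<n. V $$ (c,p) * cnj (V $$ (d,r)) * U $$ (q,x) * cnj (U $$ (s,y)) * \<Phi> (matunit n c d) $$ (x,y))"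
  proof (intro sum.cong refl)
    fix x y assume "x \<in> {..<m}" "y \<in> {..<m}"
    hence xy: "x < m" "y < m" by auto
    have "\<Phi> ?Y $$ (x,y) = (\<Sum>c<n. \<Sum>d<n. ?Y $$ (c,d) * \<Phi> (matunit n c d) $$ (x,y))"
      by (rule expand[OF L Yc xy])
    also have "\<dots> = (\<Sum>c<n. \<Sum>d<n. V $$ (c,p) * cnj (V $$ (d,r)) * \<Phi> (matunit n c d) $$ (x,y))"
      by (intro sum.cong refl) (simp add: ad_unit[OF V pr])
    finally show "U $$ (q,x) * \<Phi> ?Y $$ (x,y) * cnj (U $$ (s,y)) =
      (\<Sum>c<n. \<Sum>d<n. V $$ (c,p) * cnj (V $$ (d,r)) * U $$ (q,x) * cnj (U $$ (s,y)) * \<Phi> (matunit n c d) $$ (x,y))"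
      by (simp add: sum_distrib_left sum_distrib_right mult_ac)
  qed
  also have "\<dots> = (\<Sum>c<n. \<Sum>d<n. \<Sum>x<m. \<Sum>y<m. V $$ (c,p) * cnj (V $$ (d,r)) * U $$ (q,x) * cnj (U $$ (s,y)) * \<Phi> (matunit n c d) $$ (x,y))"
    by (rule swap4)
  also have "\<dots> = (\<Sum>c<n. \<Sum>d<n. \<Sum>x<m. \<Sum>y<m. transpose_mat V $$ (p,c) * cnj (transpose_mat V $$ (r,d)) * U $$ (q,x) * cnj (U $$ (s,y)) * \<Phi> (matunit n c d) $$ (x,y))"
    using V pr by (intro sum.cong refl) simp
  also have "\<dots> = (?T * choi n m \<Phi> * cadj ?T) $$ (i,j)"
    unfolding ip jp by (rule conj_entry[OF L VT U pr qs, symmetric])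
  finally show "choi n m (\<lambda>X. Ad U (\<Phi> (Ad V X))) $$ (i,j) = (?T * choi n m \<Phi> * cadj ?T) $$ (i,j)" .
qed



lemma collapse1:
  fixes f :: "nat \<Rightarrow> nat \<Rightarrow> complex"
  assumes q: "q < m" and s: "s < m"
  shows "(\<Sum>x<m. \<Sum>y<m. k * (1\<^sub>m m) $$ (q,x) * cnj ((1\<^sub>m m) $$ (s,y)) * f x y) = k * f q s"
proof -
  have "(\<Sum>y<m. k * (1\<^sub>m m) $$ (q,x) * cnj ((1\<^sub>m m) $$ (s,y)) * f x y) = (if x = q then k * f q s else 0)"
    if x: "x < m" for x
  proof (cases "x = q")
    case True
    have "(\<Sum>y<m. k * (1\<^sub>m m) $$ (q,x) * cnj ((1\<^sub>m m) $$ (s,y)) * f x y) = (\<Sum>y<m. if y = s then k * f q s else 0)"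
      using True q s by (intro sum.cong refl) auto
    then show ?thesis using True s by simp
  next
    case False
    then show ?thesis using x q by simp
  qed
  hence "(\<Sum>x<m. \<Sum>y<m. k * (1\<^sub>m m) $$ (q,x) * cnj ((1\<^sub>m m) $$ (s,y)) * f x y) = (\<Sum>x<m. if x = q then k * f q s else 0)"
    by (intro sum.cong refl) auto
  also have "\<dots> = k * f q s" using q by simp
  finally show ?thesis .
qed

lemma outer_carrier: "v \<in> carrier_vec n \<Longrightarrow> w \<in> carrier_vec n \<Longrightarrow> outer v w \<in> carrier_mat n n"
  unfolding outer_def by (rule carrier_matI) (auto dest: carrier_vecD)

lemma gen_choi_conj:
  assumes L: "linear_map n m \<Phi>" and v: "\<forall>i<n. v i \<in> carrier_vec n"
  shows "gen_choi n m (\<lambda>i j. outer (v i) (v j)) \<Phi> =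
    kron (mat n n (\<lambda>(i,j). v j $ i) * transpose_mat (mat n n (\<lambda>(i,j). v j $ i))) (1\<^sub>m m) * choi n m \<Phi> *
    cadj (kron (mat n n (\<lambda>(i,j). v j $ i) * transpose_mat (mat n n (\<lambda>(i,j). v j $ i))) (1\<^sub>m m))"
proof (rule eq_matI)
  define V where "V = mat n n (\<lambda>(i,j). v j $ i)"
  define W where "W = V * transpose_mat V"
  have Vc: "V \<in> carrier_mat n n" unfolding V_def by simp
  have Wc: "W \<in> carrier_mat n n" unfolding W_def using Vc by simp
  have I: "1\<^sub>m m \<in> carrier_mat m m" by simp
  let ?T = "kron W (1\<^sub>m m)"
  have Tc: "?T \<in> carrier_mat (n*m) (n*m)" using kron_carrier[OF Wc I] .
  have cT: "cadj ?T \<in> carrier_mat (n*m) (n*m)" using cadj_carrier2[OF Tc] .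
  have RC: "?T * choi n m \<Phi> * cadj ?T \<in> carrier_mat (n*m) (n*m)"
    using mult_carrier_mat[OF mult_carrier_mat[OF Tc choi_carrier] cT] .
  note RC' = RC[unfolded W_def V_def]
  show "dim_row (gen_choi n m (\<lambda>i j. outer (v i) (v j)) \<Phi>) = dim_row (kron (mat n n (\<lambda>(i,j). v j $ i) * transpose_mat (mat n n (\<lambda>(i,j). v j $ i))) (1\<^sub>m m) * choi n m \<Phi> *
    cadj (kron (mat n n (\<lambda>(i,j). v j $ i) * transpose_mat (mat n n (\<lambda>(i,j). v j $ i))) (1\<^sub>m m)))"
    "dim_col (gen_choi n m (\<lambda>i j. outer (v i) (v j)) \<Phi>) = dim_col (kron (mat n n (\<lambda>(i,j). v j $ i) * transpose_mat (mat n n (\<lambda>(i,j). v j $ i))) (1\<^sub>m m) * choi n m \<Phi> *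
    cadj (kron (mat n n (\<lambda>(i,j). v j $ i) * transpose_mat (mat n n (\<lambda>(i,j). v j $ i))) (1\<^sub>m m)))"
    using carrier_matD[OF RC'] carrier_matD[OF gen_choi_carrier, of n m "\<lambda>i j. outer (v i) (v j)" \<Phi>] by (simp_all only:)
  fix i j assume "i < dim_row (kron (mat n n (\<lambda>(i,j). v j $ i) * transpose_mat (mat n n (\<lambda>(i,j). v j $ i))) (1\<^sub>m m) * choi n m \<Phi> *
    cadj (kron (mat n n (\<lambda>(i,j). v j $ i) * transpose_mat (mat n n (\<lambda>(i,j). v j $ i))) (1\<^sub>m m)))"
    "j < dim_col (kron (mat n n (\<lambda>(i,j). v j $ i) * transpose_mat (mat n n (\<lambda>(i,j). v j $ i))) (1\<^sub>m m) * choi n m \<Phi> *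
    cadj (kron (mat n n (\<lambda>(i,j). v j $ i) * transpose_mat (mat n n (\<lambda>(i,j). v j $ i))) (1\<^sub>m m)))"
  hence ij: "i < n*m" "j < n*m" using carrier_matD[OF RC'] by (simp_all only:)
  then obtain p q r s where ip: "i = p*m+q" and jp: "j = r*m+s" and pr: "p < n" "r < n" and qs: "q < m" "s < m"
    using idx_decomp by metis
  have car: "\<forall>A\<in>carrier_mat n n. \<Phi> A \<in> carrier_mat m m" using L unfolding linear_map_def by auto
  have Oc: "a < n \<Longrightarrow> b < n \<Longrightarrow> outer (v a) (v b) \<in> carrier_mat n n" for a b using v outer_carrier by blast
  have dv: "a < n \<Longrightarrow> dim_vec (v a) = n" for a using v by (auto dest: carrier_vecD)
  have vV: "a < n \<Longrightarrow> c < n \<Longrightarrow> v a $ c = V $$ (c,a)" for a c unfolding V_def by simp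
  have Oe: "a < n \<Longrightarrow> b < n \<Longrightarrow> c < n \<Longrightarrow> d < n \<Longrightarrow> outer (v a) (v b) $$ (c,d) = V $$ (c,a) * cnj (V $$ (d,b))" for a b c d
    using dv vV by (simp add: outer_def)
  have "gen_choi n m (\<lambda>i j. outer (v i) (v j)) \<Phi> $$ (i,j) =
    (\<Sum>a<n. \<Sum>b<n. kron (outer (v a) (v b)) (\<Phi> (outer (v a) (v b))) $$ (p*m+q, r*m+s))"
    unfolding gen_choi_def using ij ip jp by simp
  also have "\<dots> = (\<Sum>a<n. \<Sum>b<n. \<Sum>c<n. \<Sum>d<n. V $$ (p,a) * V $$ (c,a) * cnj (V $$ (r,b)) * cnj (V $$ (d,b)) * \<Phi> (matunit n c d) $$ (q,s))"
  proof (intro sum.cong refl)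
    fix a b assume "a \<in> {..<n}" "b \<in> {..<n}"
    hence ab: "a < n" "b < n" by auto
    have PO: "\<Phi> (outer (v a) (v b)) \<in> carrier_mat m m" using car Oc[OF ab] by blast
    have "kron (outer (v a) (v b)) (\<Phi> (outer (v a) (v b))) $$ (p*m+q, r*m+s) =
      outer (v a) (v b) $$ (p,r) * \<Phi> (outer (v a) (v b)) $$ (q,s)"
      by (rule kron_index_pair[OF Oc[OF ab] PO pr qs])
    also have "\<Phi> (outer (v a) (v b)) $$ (q,s) = (\<Sum>c<n. \<Sum>d<n. V $$ (c,a) * cnj (V $$ (d,b)) * \<Phi> (matunit n c d) $$ (q,s))"
      unfolding expand[OF L Oc[OF ab] qs] by (intro sum.cong refl) (simp add: Oe[OF ab])
    also have "outer (v a) (v b) $$ (p,r) * (\<Sum>c<n. \<Sum>d<n. V $$ (c,a) * cnj (V $$ (d,b)) * \<Phi> (matunit n c d) $$ (q,s))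
      = (\<Sum>c<n. \<Sum>d<n. V $$ (p,a) * V $$ (c,a) * cnj (V $$ (r,b)) * cnj (V $$ (d,b)) * \<Phi> (matunit n c d) $$ (q,s))"
      unfolding Oe[OF ab pr] sum_distrib_left by (intro sum.cong refl) (simp add: mult_ac)
    finally show "kron (outer (v a) (v b)) (\<Phi> (outer (v a) (v b))) $$ (p*m+q, r*m+s) =
      (\<Sum>c<n. \<Sum>d<n. V $$ (p,a) * V $$ (c,a) * cnj (V $$ (r,b)) * cnj (V $$ (d,b)) * \<Phi> (matunit n c d) $$ (q,s))" .
  qed
  also have "\<dots> = (\<Sum>c<n. \<Sum>d<n. \<Sum>a<n. \<Sum>b<n. V $$ (p,a) * V $$ (c,a) * cnj (V $$ (r,b)) * cnj (V $$ (d,b)) * \<Phi> (matunit n c d) $$ (q,s))"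
    by (rule swap4)
  also have "\<dots> = (\<Sum>c<n. \<Sum>d<n. W $$ (p,c) * cnj (W $$ (r,d)) * \<Phi> (matunit n c d) $$ (q,s))"
  proof (intro sum.cong refl)
    fix c d assume "c \<in> {..<n}" "d \<in> {..<n}"
    hence cd: "c < n" "d < n" by auto
    have Wpc: "W $$ (p,c) = (\<Sum>a<n. V $$ (p,a) * V $$ (c,a))"
      unfolding W_def using Vc pr cd by (simp add: scalar_prod_def atLeast0LessThan)
    have Wrd: "W $$ (r,d) = (\<Sum>b<n. V $$ (r,b) * V $$ (d,b))"
      unfolding W_def using Vc pr cd by (simp add: scalar_prod_def atLeast0LessThan)
    show "(\<Sum>a<n. \<Sum>b<n. V $$ (p,a) * V $$ (c,a) * cnj (V $$ (r,b)) * cnj (V $$ (d,b)) * \<Phi> (matunit n c d) $$ (q,s)) =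
      W $$ (p,c) * cnj (W $$ (r,d)) * \<Phi> (matunit n c d) $$ (q,s)"
      unfolding Wpc Wrd by (simp add: cnj_sum sum_distrib_left sum_distrib_right mult_ac, rule sum.swap)
  qed
  also have "\<dots> = (\<Sum>c<n. \<Sum>d<n. \<Sum>x<m. \<Sum>y<m. W $$ (p,c) * cnj (W $$ (r,d)) * (1\<^sub>m m) $$ (q,x) * cnj ((1\<^sub>m m) $$ (s,y)) * \<Phi> (matunit n c d) $$ (x,y))"
  proof (intro sum.cong refl)
    fix c d
    show "W $$ (p,c) * cnj (W $$ (r,d)) * \<Phi> (matunit n c d) $$ (q,s) =
      (\<Sum>x<m. \<Sum>y<m. W $$ (p,c) * cnj (W $$ (r,d)) * (1\<^sub>m m) $$ (q,x) * cnj ((1\<^sub>m m) $$ (s,y)) * \<Phi> (matunit n c d) $$ (x,y))"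
      using collapse1[OF qs, of "W $$ (p,c) * cnj (W $$ (r,d))" "\<lambda>x y. \<Phi> (matunit n c d) $$ (x,y)"] by simp
  qed
  also have "\<dots> = (?T * choi n m \<Phi> * cadj ?T) $$ (i,j)"
    unfolding ip jp by (rule conj_entry[OF L Wc I pr qs, symmetric])
  finally show "gen_choi n m (\<lambda>i j. outer (v i) (v j)) \<Phi> $$ (i,j) = (kron (mat n n (\<lambda>(i,j). v j $ i) * transpose_mat (mat n n (\<lambda>(i,j). v j $ i))) (1\<^sub>m m) * choi n m \<Phi> *
    cadj (kron (mat n n (\<lambda>(i,j). v j $ i) * transpose_mat (mat n n (\<lambda>(i,j). v j $ i))) (1\<^sub>m m))) $$ (i,j)"
    unfolding W_def V_def .
qed



lemma cadj_one: "cadj (1\<^sub>m m) = 1\<^sub>m m"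
  by (rule eq_matI) auto

lemma unitary_one: "unitary_mat m (1\<^sub>m m)"
  unfolding unitary_mat_def cadj_one by simp

lemma onb_unitary:
  assumes v: "\<forall>i<n. v i \<in> carrier_vec n"
    and o: "\<forall>i<n. \<forall>j<n. cinner (v i) (v j) = (if i = j then 1 else 0)"
  shows "unitary_mat n (mat n n (\<lambda>(i,j). v j $ i))"
proof -
  define V where "V = mat n n (\<lambda>(i,j). v j $ i)"
  have Vc: "V \<in> carrier_mat n n" unfolding V_def by simp
  have cV: "cadj V \<in> carrier_mat n n" using cadj_carrier2[OF Vc] .
  have dv: "a < n \<Longrightarrow> dim_vec (v a) = n" for a using v by (auto dest: carrier_vecD)
  have 1: "cadj V * V = 1\<^sub>m n"
  proof (rule eq_matI)
    fix i j assume "i < dim_row (1\<^sub>m n)" "j < dim_col (1\<^sub>m n)"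
    hence ij: "i < n" "j < n" by auto
    have "(cadj V * V) $$ (i,j) = (\<Sum>k<n. cnj (v i $ k) * v j $ k)"
      using ij Vc unfolding V_def by (simp add: scalar_prod_def atLeast0LessThan)
    also have "\<dots> = cinner (v i) (v j)" unfolding cinner_def using dv[OF ij(2)] by simp
    also have "\<dots> = 1\<^sub>m n $$ (i,j)" using o ij by simp
    finally show "(cadj V * V) $$ (i,j) = 1\<^sub>m n $$ (i,j)" .
  qed (use cV Vc in auto)
  have 2: "V * cadj V = 1\<^sub>m n" using mat_mult_left_right_inverse[OF cV Vc 1] .
  show ?thesis using Vc 1 2 unfolding unitary_mat_def V_def by simp
qed

theorem proposition3p11:
  fixes n m :: nat and \<alpha> :: real and \<Phi> :: "complex mat \<Rightarrow> complex mat"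
  assumes "1 \<le> \<alpha>" and "\<alpha> \<le> real (min n m)"
    and "linear_map n m \<Phi>" and "hermitian_preserving n m \<Phi>"
  shows "(\<forall>U V. unitary_mat m U \<and> unitary_mat n V \<longrightarrow>
            (in_P n m \<alpha> \<Phi> \<longleftrightarrow> in_P n m \<alpha> (\<lambda>X. Ad U (\<Phi> (Ad V X)))) \<and>
            (in_SP n m \<alpha> \<Phi> \<longleftrightarrow> in_SP n m \<alpha> (\<lambda>X. Ad U (\<Phi> (Ad V X)))))
       \<and> (\<forall>v :: nat \<Rightarrow> complex vec.
            (\<forall>i<n. v i \<in> carrier_vec n) \<and>
            (\<forall>i<n. \<forall>j<n. cinner (v i) (v j) = (if i = j then 1 else 0)) \<longrightarrow>
            (gen_choi n m (\<lambda>i j. outer (v i) (v j)) \<Phi> \<in> BP n m \<alpha> \<longleftrightarrow> choi n m \<Phi> \<in> BP n m \<alpha>) \<and>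
            (gen_choi n m (\<lambda>i j. outer (v i) (v j)) \<Phi> \<in> K_cone n m \<alpha> \<longleftrightarrow> choi n m \<Phi> \<in> K_cone n m \<alpha>))"
proof (intro conjI allI impI)
  note L = assms(3) and HP = assms(4)
  fix U V assume UV: "unitary_mat m U \<and> unitary_mat n V"
  have U: "unitary_mat m U" and V: "unitary_mat n V" using UV by auto
  have Uc: "U \<in> carrier_mat m m" and Vc: "V \<in> carrier_mat n n" using U V unfolding unitary_mat_def by auto
  have hp: "hermitian_preserving n m (\<lambda>X. Ad U (\<Phi> (Ad V X)))"
    unfolding hermitian_preserving_def
  proof (intro allI impI)
    fix A assume "hermitian_mat n A"
    hence "hermitian_mat n (Ad V A)" unfolding Ad_def using herm_conj Vc by blast
    hence "hermitian_mat m (\<Phi> (Ad V A))" using HP unfolding hermitian_preserving_def by blast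
    then show "hermitian_mat m (Ad U (\<Phi> (Ad V A)))" unfolding Ad_def using herm_conj Uc by blast
  qed
  have lu: "local_unitary n m (kron (transpose_mat V) U)"
    unfolding local_unitary_def using unitary_transpose[OF V] U by blast
  have eq: "choi n m (\<lambda>X. Ad U (\<Phi> (Ad V X))) = kron (transpose_mat V) U * choi n m \<Phi> * cadj (kron (transpose_mat V) U)"
    by (rule choi_comp[OF L Uc Vc])
  show "in_P n m \<alpha> \<Phi> \<longleftrightarrow> in_P n m \<alpha> (\<lambda>X. Ad U (\<Phi> (Ad V X)))"
    unfolding in_P_def eq BP_iff[OF lu choi_carrier] using hp HP by blast
  show "in_SP n m \<alpha> \<Phi> \<longleftrightarrow> in_SP n m \<alpha> (\<lambda>X. Ad U (\<Phi> (Ad V X)))"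
    unfolding in_SP_def eq K_iff[OF lu choi_carrier] using hp HP by blast
next
  note L = assms(3)
  fix v :: "nat \<Rightarrow> complex vec"
  assume h: "(\<forall>i<n. v i \<in> carrier_vec n) \<and> (\<forall>i<n. \<forall>j<n. cinner (v i) (v j) = (if i = j then 1 else 0))"
  have v: "\<forall>i<n. v i \<in> carrier_vec n" using h by blast
  have Vu: "unitary_mat n (mat n n (\<lambda>(i,j). v j $ i))" using onb_unitary h by blast
  have Wu: "unitary_mat n (mat n n (\<lambda>(i,j). v j $ i) * transpose_mat (mat n n (\<lambda>(i,j). v j $ i)))"
    by (rule unitary_mult[OF Vu unitary_transpose[OF Vu]])
  have lu: "local_unitary n m (kron (mat n n (\<lambda>(i,j). v j $ i) * transpose_mat (mat n n (\<lambda>(i,j). v j $ i))) (1\<^sub>m m))"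
    unfolding local_unitary_def using Wu unitary_one by blast
  show "gen_choi n m (\<lambda>i j. outer (v i) (v j)) \<Phi> \<in> BP n m \<alpha> \<longleftrightarrow> choi n m \<Phi> \<in> BP n m \<alpha>"
    unfolding gen_choi_conj[OF L v] by (rule BP_iff[OF lu choi_carrier])
  show "gen_choi n m (\<lambda>i j. outer (v i) (v j)) \<Phi> \<in> K_cone n m \<alpha> \<longleftrightarrow> choi n m \<Phi> \<in> K_cone n m \<alpha>"
    unfolding gen_choi_conj[OF L v] by (rule K_iff[OF lu choi_carrier])
qed

end
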